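(* Consider a two-player general-sum bimatrix game with payoff matrices $\mathbf{R}=(R_1,R_2)$, together with the risk-averse, boundedly rational objectives and the associated modified 4-player game described in the context. If the modified 4-player game is strictly monotone, i.e. its gradient operator $F(\cdot;\mathbf{R})$ satisfies $(z-z')^T(F(z;\mathbf{R})-F(z';\mathbf{R}))>0$ for all $z\neq z'$ in $\mathcal{Z}$, then the risk-adjusted quantal response equilibrium (RQE) of the original two-player game is unique: any two RQEs of the original game coincide.
   Context: Two players $i\in\{1,2\}$ have finite action sets $\mathcal{A}_1,\mathcal{A}_2$; $-i$ denotes the player other than $i$, and $\Delta_n$ denotes the probability simplex in $\mathbb{R}^n$. The payoff matrices are $R_1\in\mathbb{R}^{|\mathcal{A}_1|\times|\mathcal{A}_2|}$ and $R_2\in\mathbb{R}^{|\mathcal{A}_2|\times|\mathcal{A}_1|}$, where $[R_i]_{mn}$ is the payoff of player $i$ when $i$ plays $m$ and $-i$ plays $n$. For each $i$ fix $\epsilon_i>0$, a differentiable strictly convex function $\nu_i$ (defined on an open set containing $\Delta_{|\mathcal{A}_i|}$), and a differentiable penalty function $D_i:\Delta_{|\mathcal{A}_{-i}|}\times\Delta_{|\mathcal{A}_{-i}|}\to\mathbb{R}$ that is convex in its first argument. Player $i$ chooses a mixed strategy $\pi_i\in\Delta_{|\mathcal{A}_i|}$ to minimize $$f_i(\pi_i,\pi_{-i};R_i)=\sup_{p_i\in\Delta_{|\mathcal{A}_{-i}|}}\big[-\pi_i^TR_ip_i-D_i(p_i,\pi_{-i})\big]+\epsilon_i\nu_i(\pi_i).$$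 An RQE is a pair $(\pi_1^*,\pi_2^* )\in\Delta_{|\mathcal{A}_1|}\times\Delta_{|\mathcal{A}_2|}$ with $f_i(\pi_i^*,\pi_{-i}^*;R_i)\le f_i(\pi_i,\pi_{-i}^*;R_i)$ for all $\pi_i\in\Delta_{|\mathcal{A}_i|}$ and both $i$. The modified 4-player game has joint strategy $z=(\pi_1,\pi_2,p_1,p_2)\in\mathcal{Z}=\Delta_{|\mathcal{A}_1|}\times\Delta_{|\mathcal{A}_2|}\times\Delta_{|\mathcal{A}_2|}\times\Delta_{|\mathcal{A}_1|}$; player $\pi_i$ minimizes $J_i(z)=-\pi_i^TR_ip_i-D_i(p_i,\pi_{-i})+\epsilon_i\nu_i(\pi_i)$ over $\pi_i$, and adversary $p_i$ minimizes $\bar J_i(z)=\pi_i^TR_ip_i+D_i(p_i,\pi_{-i})-\epsilon_i\nu_i(\pi_i)$ over $p_i$. Its gradient operator is $$F(z;\mathbf{R})=\big(-R_1p_1+\epsilon_1\nabla\nu_1(\pi_1),\ -R_2p_2+\epsilon_2\nabla\nu_2(\pi_2),\ R_1^T\pi_1+\nabla_{p_1}D_1(p_1,\pi_2),\ R_2^T\pi_2+\nabla_{p_2}D_2(p_2,\pi_1)\big).$$ *)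

theory Defs
  imports "HOL-Analysis.Analysis"
begin

definition prob_simplex :: "(real ^ 'n::finite) set" where
  "prob_simplex = {x. (\<forall>i. 0 \<le> x $ i) \<and> (\<Sum>i\<in>UNIV. x $ i) = 1}"

definition strictly_convex_on :: "'a::real_vector set \<Rightarrow> ('a \<Rightarrow> real) \<Rightarrow> bool" where
  "strictly_convex_on S f \<longleftrightarrow> convex S \<and>
     (\<forall>x\<in>S. \<forall>y\<in>S. x \<noteq> y \<longrightarrow> (\<forall>t. 0 < t \<and> t < 1 \<longrightarrow>
        f ((1 - t) *\<^sub>R x + t *\<^sub>R y) < (1 - t) * f x + t * f y))"

definition grad :: "('a::euclidean_space \<Rightarrow> real) \<Rightarrow> 'a \<Rightarrow> 'a" where
  "grad f x = (THE g. (f has_derivative (\<lambda>h. g \<bullet> h)) (at x))"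

definition obj ::
  "real ^ 'o::finite ^ 'm::finite \<Rightarrow> real \<Rightarrow> (real ^ 'm \<Rightarrow> real) \<Rightarrow>
   (real ^ 'o \<Rightarrow> real ^ 'o \<Rightarrow> real) \<Rightarrow> real ^ 'm \<Rightarrow> real ^ 'o \<Rightarrow> real" where
  "obj R eps nu D s opp =
     (SUP p\<in>prob_simplex. - (s \<bullet> (R *v p)) - D p opp) + eps * nu s"

definition is_RQE ::
  "real ^ 'b::finite ^ 'a::finite \<Rightarrow> real ^ 'a ^ 'b \<Rightarrow> real \<Rightarrow> real \<Rightarrow>
   (real ^ 'a \<Rightarrow> real) \<Rightarrow> (real ^ 'b \<Rightarrow> real) \<Rightarrow>
   (real ^ 'b \<Rightarrow> real ^ 'b \<Rightarrow> real) \<Rightarrow> (real ^ 'a \<Rightarrow> real ^ 'a \<Rightarrow> real) \<Rightarrow>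
   real ^ 'a \<Rightarrow> real ^ 'b \<Rightarrow> bool" where
  "is_RQE R1 R2 eps1 eps2 nu1 nu2 D1 D2 pi1 pi2 \<longleftrightarrow>
     pi1 \<in> prob_simplex \<and> pi2 \<in> prob_simplex \<and>
     (\<forall>s\<in>prob_simplex. obj R1 eps1 nu1 D1 pi1 pi2 \<le> obj R1 eps1 nu1 D1 s pi2) \<and>
     (\<forall>s\<in>prob_simplex. obj R2 eps2 nu2 D2 pi2 pi1 \<le> obj R2 eps2 nu2 D2 s pi1)"

definition Zset :: "((real ^ 'a::finite) \<times> (real ^ 'b::finite) \<times> (real ^ 'b) \<times> (real ^ 'a)) set" where
  "Zset = prob_simplex \<times> prob_simplex \<times> prob_simplex \<times> prob_simplex"

definition Fop ::
  "real ^ 'b::finite ^ 'a::finite \<Rightarrow> real ^ 'a ^ 'b \<Rightarrow> real \<Rightarrow> real \<Rightarrow>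
   (real ^ 'a \<Rightarrow> real) \<Rightarrow> (real ^ 'b \<Rightarrow> real) \<Rightarrow>
   (real ^ 'b \<Rightarrow> real ^ 'b \<Rightarrow> real) \<Rightarrow> (real ^ 'a \<Rightarrow> real ^ 'a \<Rightarrow> real) \<Rightarrow>
   (real ^ 'a) \<times> (real ^ 'b) \<times> (real ^ 'b) \<times> (real ^ 'a) \<Rightarrow>
   (real ^ 'a) \<times> (real ^ 'b) \<times> (real ^ 'b) \<times> (real ^ 'a)" where
  "Fop R1 R2 eps1 eps2 nu1 nu2 D1 D2 z =
     (case z of (pi1, pi2, p1, p2) \<Rightarrow>
       (- (R1 *v p1) + eps1 *\<^sub>R grad nu1 pi1,
        - (R2 *v p2) + eps2 *\<^sub>R grad nu2 pi2,
        transpose R1 *v pi1 + grad (\<lambda>p. D1 p pi2) p1,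
        transpose R2 *v pi2 + grad (\<lambda>p. D2 p pi1) p2))"

definition strictly_monotone_on :: "'a::real_inner set \<Rightarrow> ('a \<Rightarrow> 'a) \<Rightarrow> bool" where
  "strictly_monotone_on S F \<longleftrightarrow>
     (\<forall>z\<in>S. \<forall>z'\<in>S. z \<noteq> z' \<longrightarrow> (z - z') \<bullet> (F z - F z') > 0)"

end

theory Submission
  imports Defs
begin

lemma grad_works:
  fixes f :: "'a::euclidean_space \<Rightarrow> real"
  assumes "f differentiable (at x)"
  shows "(f has_derivative (\<lambda>h. grad f x \<bullet> h)) (at x)"
proof -
  obtain L where L: "(f has_derivative L) (at x)" using assms unfolding differentiable_def by blast
  have lin: "linear L" using L has_derivative_linear by blast
  define g where "g = (\<Sum>b\<in>Basis. L b *\<^sub>R b)"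
  have eq: "L h = g \<bullet> h" for h
  proof -
    have "L h = L (\<Sum>b\<in>Basis. (h \<bullet> b) *\<^sub>R b)" by (simp add: euclidean_representation)
    also have "\<dots> = (\<Sum>b\<in>Basis. (h \<bullet> b) * L b)"
      using lin by (simp add: linear_sum linear_scale)
    also have "\<dots> = g \<bullet> h" unfolding g_def by (simp add: inner_sum_left mult.commute inner_commute[of h])
    finally show ?thesis .
  qed
  have ex: "(f has_derivative (\<lambda>h. g \<bullet> h)) (at x)" 
    by (rule has_derivative_eq_rhs[OF L]) (simp add: fun_eq_iff eq)
  have uniq: "g' = g" if "(f has_derivative (\<lambda>h. g' \<bullet> h)) (at x)" for g'
  proof -
    have "(\<lambda>h. g' \<bullet> h) = (\<lambda>h. g \<bullet> h)" using has_derivative_unique[OF that ex] .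
    then have "g' \<bullet> (g' - g) = g \<bullet> (g' - g)" by metis
    then have "(g' - g) \<bullet> (g' - g) = 0" by (simp add: inner_diff_left)
    then show ?thesis by simp
  qed
  have "grad f x = g" unfolding grad_def using ex uniq by (rule the_equality)
  then show ?thesis using ex by simp
qed

lemma simplex_props:
  shows "compact (prob_simplex :: (real ^ 'n::finite) set)"
    and "convex (prob_simplex :: (real ^ 'n::finite) set)"
    and "(prob_simplex :: (real ^ 'n::finite) set) \<noteq> {}"
proof -
  have cl: "closed (prob_simplex :: (real ^ 'n::finite) set)"
    unfolding prob_simplex_def
    by (intro closed_Collect_conj closed_Collect_all closed_Collect_le closed_Collect_eq continuous_intros)
  have "norm x \<le> 1" if "x \<in> (prob_simplex :: (real ^ 'n::finite) set)" for x
  proof -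
    have "norm x \<le> (\<Sum>i\<in>UNIV. \<bar>x$i\<bar>)" by (rule norm_le_l1_cart)
    also have "\<dots> = (\<Sum>i\<in>UNIV. x$i)" using that unfolding prob_simplex_def by simp
    finally show ?thesis using that unfolding prob_simplex_def by simp
  qed
  then have "bounded (prob_simplex :: (real ^ 'n::finite) set)" unfolding bounded_iff by blast
  then show "compact (prob_simplex :: (real ^ 'n::finite) set)" using cl
    by (simp add: compact_eq_bounded_closed)
  show "convex (prob_simplex :: (real ^ 'n::finite) set)"
    unfolding convex_def prob_simplex_def
    by (auto simp: sum.distrib sum_distrib_left[symmetric])
  have "(\<chi> i. 1 / real CARD('n)) \<in> (prob_simplex :: (real ^ 'n::finite) set)"
    unfolding prob_simplex_def by simp
  then show "(prob_simplex :: (real ^ 'n::finite) set) \<noteq> {}" by blast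
qed

lemma foc_min:
  fixes f :: "'a::euclidean_space \<Rightarrow> real"
  assumes der: "(f has_derivative (\<lambda>h. g \<bullet> h)) (at p)"
    and cvx: "convex S" and p: "p \<in> S" and q: "q \<in> S"
    and min: "\<forall>y\<in>S. f p \<le> f y"
  shows "g \<bullet> (q - p) \<ge> 0"
proof (rule ccontr)
  assume neg: "\<not> ?thesis"
  define d where "d = q - p"
  have l: "((\<lambda>t::real. p + t *\<^sub>R d) has_derivative (\<lambda>t. t *\<^sub>R d)) (at 0)"
    by (auto intro!: derivative_eq_intros)
  have der0: "(f has_derivative (\<lambda>h. g \<bullet> h)) (at ((\<lambda>t::real. p + t *\<^sub>R d) 0))" using der by simp
  have "((f \<circ> (\<lambda>t. p + t *\<^sub>R d)) has_derivative ((\<lambda>h. g \<bullet> h) \<circ> (\<lambda>t. t *\<^sub>R d))) (at 0)"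
    by (rule diff_chain_at[OF l der0])
  then have 1: "((\<lambda>t. f (p + t *\<^sub>R d)) has_derivative (\<lambda>t. t * (g \<bullet> d))) (at 0)"
    by (simp add: o_def)
  have "DERIV (\<lambda>t. f (p + t *\<^sub>R d)) 0 :> (g \<bullet> d)"
    unfolding has_field_derivative_def by (rule has_derivative_eq_rhs[OF 1]) (simp add: fun_eq_iff)
  moreover have "g \<bullet> d < 0" using neg d_def by simp
  ultimately obtain e where e: "e > 0" "\<forall>h>0. h < e \<longrightarrow> f (p + 0 *\<^sub>R d) > f (p + (0 + h) *\<^sub>R d)"
    using DERIV_neg_dec_right by blast
  define h where "h = min (e/2) (1/2)"
  have h: "h > 0" "h < e" "h \<le> 1" using e unfolding h_def by auto
  have "p + h *\<^sub>R d = (1 - h) *\<^sub>R p + h *\<^sub>R q" unfolding d_def by (simp add: algebra_simps)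
  also have "\<dots> \<in> S" using cvx p q h unfolding convex_def by auto
  finally have "f p \<le> f (p + h *\<^sub>R d)" using min by blast
  moreover have "f p > f (p + h *\<^sub>R d)" using e h by auto
  ultimately show False by simp
qed

lemma line_deriv:
  fixes f :: "'a::euclidean_space \<Rightarrow> real"
  assumes der: "(f has_derivative (\<lambda>h. g \<bullet> h)) (at p)"
  shows "DERIV (\<lambda>t. f (p + t *\<^sub>R d)) 0 :> (g \<bullet> d)"
proof -
  have l: "((\<lambda>t::real. p + t *\<^sub>R d) has_derivative (\<lambda>t. t *\<^sub>R d)) (at 0)"
    by (auto intro!: derivative_eq_intros)
  have der0: "(f has_derivative (\<lambda>h. g \<bullet> h)) (at ((\<lambda>t::real. p + t *\<^sub>R d) 0))" using der by simp
  have "((f \<circ> (\<lambda>t. p + t *\<^sub>R d)) has_derivative ((\<lambda>h. g \<bullet> h) \<circ> (\<lambda>t. t *\<^sub>R d))) (at 0)"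
    by (rule diff_chain_at[OF l der0])
  then have 1: "((\<lambda>t. f (p + t *\<^sub>R d)) has_derivative (\<lambda>t. t * (g \<bullet> d))) (at 0)"
    by (simp add: o_def)
  show ?thesis
    unfolding has_field_derivative_def by (rule has_derivative_eq_rhs[OF 1]) (simp add: fun_eq_iff)
qed

lemma uniq_alg:
  fixes c a b p q :: "'a::real_inner"
  shows "(c + a) \<bullet> (q - p) + (c + b) \<bullet> (p - q) = - ((p - q) \<bullet> (a - b))"
proof -
  have "(c + a) \<bullet> (q - p) = - ((c + a) \<bullet> (p - q))" by (metis inner_minus_right minus_diff_eq)
  then have "(c + a) \<bullet> (q - p) + (c + b) \<bullet> (p - q) = ((c + b) - (c + a)) \<bullet> (p - q)"
    by (simp add: inner_diff_left inner_add_left)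
  also have "(c + b) - (c + a) = -(a - b)" by simp
  finally show ?thesis by (metis inner_commute inner_minus_left)
qed
lemma key:
  fixes R :: "real ^ 'o::finite ^ 'm::finite" and nu :: "real ^ 'm \<Rightarrow> real"
    and D :: "real ^ 'o \<Rightarrow> real ^ 'o \<Rightarrow> real"
  assumes eps: "eps > 0"
    and U: "prob_simplex \<subseteq> U" "\<forall>x\<in>U. nu differentiable (at x)"
    and W: "prob_simplex \<times> prob_simplex \<subseteq> W" "\<forall>w\<in>W. (\<lambda>(p, q). D p q) differentiable (at w)"
    and opp: "opp \<in> prob_simplex" and s0: "s0 \<in> prob_simplex"
    and opt: "\<forall>s\<in>prob_simplex. obj R eps nu D s0 opp \<le> obj R eps nu D s opp"
    and smono: "\<forall>p\<in>prob_simplex. \<forall>q\<in>prob_simplex. p \<noteq> q \<longrightarrow>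
         (p - q) \<bullet> (grad (\<lambda>p. D p opp) p - grad (\<lambda>p. D p opp) q) > 0"
  shows "\<exists>p0\<in>prob_simplex.
     (\<forall>p\<in>prob_simplex. (transpose R *v s0 + grad (\<lambda>p. D p opp) p0) \<bullet> (p - p0) \<ge> 0) \<and>
     (\<forall>s\<in>prob_simplex. (- (R *v p0) + eps *\<^sub>R grad nu s0) \<bullet> (s - s0) \<ge> 0)"
proof -
  let ?S = "prob_simplex :: (real ^ 'o) set"
  let ?Sm = "prob_simplex :: (real ^ 'm) set"
  define Dq where "Dq = (\<lambda>p. D p opp)"
  have Ddiff: "Dq differentiable (at p)" if "p \<in> ?S" for p
  proof -
    have "(p, opp) \<in> W" using W(1) that opp by blast
    then have "(\<lambda>(p, q). D p q) differentiable (at (p, opp))" using W(2) by blast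
    then have "(\<lambda>(p, q). D p q) differentiable (at ((\<lambda>p. (p, opp)) p))" by simp
    moreover have "((\<lambda>p. (p, opp)) has_derivative (\<lambda>h. (h, 0))) (at p)"
      by (auto intro!: derivative_eq_intros)
    then have "(\<lambda>p. (p, opp)) differentiable (at p)" by (rule differentiableI)
    ultimately have "((\<lambda>(p, q). D p q) \<circ> (\<lambda>p. (p, opp))) differentiable (at p)"
      using differentiable_chain_at by blast
    then show ?thesis by (simp add: Dq_def o_def)
  qed
  have Dcont: "continuous_on ?S Dq"
    by (meson Ddiff continuous_at_imp_continuous_on differentiable_imp_continuous_within)
  have Rcont: "continuous_on A ((*v) R)" for A
    by (simp add: linear_continuous_on)
  define h where "h = (\<lambda>s p. - (s \<bullet> (R *v p)) - Dq p)"
  have hcont: "continuous_on ?S (h s)" for s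
    unfolding h_def by (intro continuous_intros Dcont Rcont)
  have hmax: "\<exists>p\<in>?S. \<forall>q\<in>?S. h s q \<le> h s p" for s
    using continuous_attains_sup[OF simplex_props(1) simplex_props(3) hcont] by blast
  have objeq: "obj R eps nu D s opp = h s p + eps * nu s"
    if "p \<in> ?S" "\<forall>q\<in>?S. h s q \<le> h s p" for s p
  proof -
    have "(SUP p\<in>?S. - (s \<bullet> (R *v p)) - D p opp) = h s p"
      by (rule cSup_eq_maximum) (use that in \<open>auto simp: h_def Dq_def\<close>)
    then show ?thesis unfolding obj_def by simp
  qed
  have hderiv: "((\<lambda>p. - h s p) has_derivative (\<lambda>x. (transpose R *v s + grad Dq p) \<bullet> x)) (at p)"
    if "p \<in> ?S" for s p
  proof -
    have e: "(\<lambda>p. - h s p) = (\<lambda>p. (transpose R *v s) \<bullet> p + Dq p)"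
      by (simp add: h_def fun_eq_iff dot_lmul_matrix)
    have "((\<lambda>p. (transpose R *v s) \<bullet> p + Dq p) has_derivative
           (\<lambda>x. (transpose R *v s) \<bullet> x + grad Dq p \<bullet> x)) (at p)"
      by (intro has_derivative_add has_derivative_inner_right grad_works Ddiff that has_derivative_ident)
    then show ?thesis unfolding e by (simp add: inner_add_left)
  qed
  have foc: "\<forall>q\<in>?S. (transpose R *v s + grad Dq p) \<bullet> (q - p) \<ge> 0"
    if "p \<in> ?S" "\<forall>q\<in>?S. h s q \<le> h s p" for s p
    using foc_min[OF hderiv[OF that(1)] simplex_props(2) that(1)] that(2) by auto
  have uniq: "p = p'" if "p \<in> ?S" "\<forall>q\<in>?S. h s0 q \<le> h s0 p"
    "p' \<in> ?S" "\<forall>q\<in>?S. h s0 q \<le> h s0 p'" for p p'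
  proof (rule ccontr)
    assume ne: "p \<noteq> p'"
    let ?c = "transpose R *v s0"
    have A: "(?c + grad Dq p) \<bullet> (p' - p) \<ge> 0" using foc[OF that(1,2)] that(3) by (rule bspec)
    have B: "(?c + grad Dq p') \<bullet> (p - p') \<ge> 0" using foc[OF that(3,4)] that(1) by (rule bspec)
    have C: "(p - p') \<bullet> (grad Dq p - grad Dq p') > 0" using smono[rule_format, OF that(1) that(3) ne] unfolding Dq_def .
    have "(?c + grad Dq p) \<bullet> (p' - p) + (?c + grad Dq p') \<bullet> (p - p') = - ((p - p') \<bullet> (grad Dq p - grad Dq p'))"
      by (rule uniq_alg)
    then show False using A B C by linarith
  qed
  obtain p0 where p0: "p0 \<in> ?S" "\<forall>q\<in>?S. h s0 q \<le> h s0 p0" using hmax by blast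
  have partc: "(- (R *v p0) + eps *\<^sub>R grad nu s0) \<bullet> (s - s0) \<ge> 0" if s: "s \<in> ?Sm" for s
  proof -
    define d where "d = s - s0"
    define st where "st = (\<lambda>t::real. s0 + t *\<^sub>R d)"
    have stS: "st t \<in> ?Sm" if "0 \<le> t" "t \<le> 1" for t
    proof -
      have "st t = (1 - t) *\<^sub>R s0 + t *\<^sub>R s" by (simp add: st_def d_def algebra_simps)
      then show ?thesis using simplex_props(2) s s0 that unfolding convex_def by auto
    qed
    define pt where "pt = (\<lambda>t. SOME p. p \<in> ?S \<and> (\<forall>q\<in>?S. h (st t) q \<le> h (st t) p))"
    have ptS: "pt t \<in> ?S \<and> (\<forall>q\<in>?S. h (st t) q \<le> h (st t) (pt t))" for t
    proof -
      have "\<exists>p. p \<in> ?S \<and> (\<forall>q\<in>?S. h (st t) q \<le> h (st t) p)" using hmax[of "st t"] by blast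
      then show ?thesis unfolding pt_def by (rule someI_ex)
    qed
    have hst: "h (st t) p = h s0 p - t * (d \<bullet> (R *v p))" for t p
      by (simp add: h_def st_def inner_add_left)
    have ineq: "0 \<le> - (d \<bullet> (R *v pt t)) + eps * ((nu (st t) - nu s0) / t)" if t: "0 < t" "t \<le> 1" for t
    proof -
      have o1: "obj R eps nu D (st t) opp = h (st t) (pt t) + eps * nu (st t)"
        using objeq ptS by blast
      have o0: "obj R eps nu D s0 opp = h s0 p0 + eps * nu s0" using objeq p0 by blast
      have "obj R eps nu D s0 opp \<le> obj R eps nu D (st t) opp" using opt stS t by simp
      moreover have "h s0 (pt t) \<le> h s0 p0" using p0 ptS by blast
      ultimately have "0 \<le> - t * (d \<bullet> (R *v pt t)) + eps * (nu (st t) - nu s0)"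
        using o1 o0 hst[of t "pt t"] by (simp add: algebra_simps)
      also have "- t * (d \<bullet> (R *v pt t)) + eps * (nu (st t) - nu s0)
          = t * (- (d \<bullet> (R *v pt t)) + eps * ((nu (st t) - nu s0) / t))"
        using t by (simp add: field_simps)
      finally show ?thesis using t by (simp add: zero_le_mult_iff)
    qed
    define u where "u = (\<lambda>n::nat. 1 / real (Suc n))"
    have u: "0 < u n" "u n \<le> 1" for n unfolding u_def by auto
    have ulim: "u \<longlonglongrightarrow> 0" unfolding u_def using LIMSEQ_Suc[OF lim_1_over_n] by simp
    obtain l r where lr: "l \<in> ?S" "strict_mono r" "((\<lambda>n. pt (u n)) \<circ> r) \<longlonglongrightarrow> l"
      using seq_compactE[OF compact_imp_seq_compact[OF simplex_props(1)], of "\<lambda>n. pt (u n)"] ptS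
      by metis
    define v where "v = u \<circ> r"
    define P where "P = (\<lambda>n. pt (v n))"
    have Plim: "P \<longlonglongrightarrow> l" using lr(3) unfolding P_def v_def by (simp add: o_def)
    have vlim: "v \<longlonglongrightarrow> 0" unfolding v_def using LIMSEQ_subseq_LIMSEQ[OF ulim lr(2)] .
    have v: "0 < v n" "v n \<le> 1" for n unfolding v_def using u by auto
    have stlim: "(\<lambda>n. st (v n)) \<longlonglongrightarrow> s0"
    proof -
      have "(\<lambda>n. s0 + v n *\<^sub>R d) \<longlonglongrightarrow> s0 + 0 *\<^sub>R d" by (intro tendsto_intros vlim)
      then show ?thesis by (simp add: st_def)
    qed
    have RPlim: "(\<lambda>n. R *v P n) \<longlonglongrightarrow> R *v l"
      by (rule bounded_linear.tendsto[OF matrix_vector_mul_bounded_linear Plim])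
    have DPlim: "(\<lambda>n. Dq (P n)) \<longlonglongrightarrow> Dq l"
      by (rule continuous_on_tendsto_compose[OF Dcont Plim lr(1)]) (simp add: P_def ptS)
    have lmax: "\<forall>q\<in>?S. h s0 q \<le> h s0 l"
    proof
      fix q assume q: "q \<in> ?S"
      have A: "(\<lambda>n. h (st (v n)) (P n)) \<longlonglongrightarrow> h s0 l"
        unfolding h_def by (intro tendsto_intros stlim RPlim DPlim)
      have B: "(\<lambda>n. h (st (v n)) q) \<longlonglongrightarrow> h s0 q"
        unfolding h_def by (intro tendsto_intros stlim)
      show "h s0 q \<le> h s0 l"
        by (rule LIMSEQ_le[OF B A]) (use ptS q in \<open>auto simp: P_def\<close>)
    qed
    have l0: "l = p0" using uniq[OF lr(1) lmax p0] .
    have nuder: "DERIV (\<lambda>t. nu (s0 + t *\<^sub>R d)) 0 :> (grad nu s0 \<bullet> d)"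
      by (rule line_deriv[OF grad_works]) (use U s0 in auto)
    then have "((\<lambda>t. (nu (s0 + (0 + t) *\<^sub>R d) - nu (s0 + 0 *\<^sub>R d)) / t) \<longlongrightarrow> grad nu s0 \<bullet> d) (at 0)"
      unfolding DERIV_def .
    then have dq0: "((\<lambda>t. (nu (st t) - nu s0) / t) \<longlongrightarrow> grad nu s0 \<bullet> d) (at 0)"
      by (simp add: st_def)
    have vat: "filterlim v (at 0) sequentially"
    proof -
      have "\<forall>n. v n \<noteq> 0" using v by (metis less_irrefl)
      then show ?thesis unfolding filterlim_at using vlim by (simp add: always_eventually)
    qed
    have dqlim: "(\<lambda>n. (nu (st (v n)) - nu s0) / v n) \<longlonglongrightarrow> grad nu s0 \<bullet> d"
      using filterlim_compose[OF dq0 vat] .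
    have alim: "(\<lambda>n. - (d \<bullet> (R *v P n)) + eps * ((nu (st (v n)) - nu s0) / v n))
        \<longlonglongrightarrow> - (d \<bullet> (R *v l)) + eps * (grad nu s0 \<bullet> d)"
      by (intro tendsto_intros RPlim dqlim)
    have "0 \<le> - (d \<bullet> (R *v l)) + eps * (grad nu s0 \<bullet> d)"
      by (rule LIMSEQ_le_const[OF alim]) (use ineq v in \<open>auto simp: P_def\<close>)
    moreover have "(- (R *v p0) + eps *\<^sub>R grad nu s0) \<bullet> (s - s0) = - (d \<bullet> (R *v l)) + eps * (grad nu s0 \<bullet> d)"
      using l0 by (simp add: d_def inner_add_left inner_diff_left inner_commute[of _ "R *v p0"])
    ultimately show ?thesis by simp
  qed
  show ?thesis
    using p0 foc[OF p0] partc unfolding Dq_def by blast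
qed

lemma inner_third:
  fixes d :: "'c::real_inner" and W :: "'a::real_inner \<times> 'b::real_inner \<times> 'c \<times> 'e::real_inner"
  shows "(0, 0, d, 0) \<bullet> W = d \<bullet> fst (snd (snd W))"
  by (cases W) simp

lemma inner_fourth:
  fixes d :: "'e::real_inner" and W :: "'a::real_inner \<times> 'b::real_inner \<times> 'c::real_inner \<times> 'e"
  shows "(0, 0, 0, d) \<bullet> W = d \<bullet> snd (snd (snd W))"
  by (cases W) simp

lemma inner_four:
  fixes W :: "'a::real_inner \<times> 'b::real_inner \<times> 'c::real_inner \<times> 'e::real_inner"
  shows "W \<bullet> (a, b, c, e) = fst W \<bullet> a + (fst (snd W) \<bullet> b + (fst (snd (snd W)) \<bullet> c + snd (snd (snd W)) \<bullet> e))"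
  by (cases W) simp

lemma inner_mono_split:
  fixes x y u w :: "'a::real_inner"
  shows "(x - y) \<bullet> (u - w) = - (u \<bullet> (y - x)) - (w \<bullet> (x - y))"
  by (simp add: inner_diff_left inner_diff_right inner_commute)

theorem proposition1:
  fixes R1 :: "real ^ 'b::finite ^ 'a::finite"
    and R2 :: "real ^ 'a ^ 'b"
    and eps1 eps2 :: real
    and nu1 :: "real ^ 'a \<Rightarrow> real" and nu2 :: "real ^ 'b \<Rightarrow> real"
    and D1 :: "real ^ 'b \<Rightarrow> real ^ 'b \<Rightarrow> real"
    and D2 :: "real ^ 'a \<Rightarrow> real ^ 'a \<Rightarrow> real"
    and U1 :: "(real ^ 'a) set" and U2 :: "(real ^ 'b) set"
    and W1 :: "((real ^ 'b) \<times> (real ^ 'b)) set" and W2 :: "((real ^ 'a) \<times> (real ^ 'a)) set"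
  assumes eps: "eps1 > 0" "eps2 > 0"
    and U1: "open U1" "prob_simplex \<subseteq> U1" "strictly_convex_on U1 nu1"
            "\<forall>x\<in>U1. nu1 differentiable (at x)"
    and U2: "open U2" "prob_simplex \<subseteq> U2" "strictly_convex_on U2 nu2"
            "\<forall>x\<in>U2. nu2 differentiable (at x)"
    and W1: "open W1" "prob_simplex \<times> prob_simplex \<subseteq> W1"
            "\<forall>w\<in>W1. (\<lambda>(p, q). D1 p q) differentiable (at w)"
            "\<forall>q\<in>prob_simplex. convex_on prob_simplex (\<lambda>p. D1 p q)"
    and W2: "open W2" "prob_simplex \<times> prob_simplex \<subseteq> W2"
            "\<forall>w\<in>W2. (\<lambda>(p, q). D2 p q) differentiable (at w)"
            "\<forall>q\<in>prob_simplex. convex_on prob_simplex (\<lambda>p. D2 p q)"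
    and mono: "strictly_monotone_on Zset (Fop R1 R2 eps1 eps2 nu1 nu2 D1 D2)"
    and rqe: "is_RQE R1 R2 eps1 eps2 nu1 nu2 D1 D2 pi1 pi2"
    and rqe': "is_RQE R1 R2 eps1 eps2 nu1 nu2 D1 D2 pi1' pi2'"
  shows "pi1 = pi1' \<and> pi2 = pi2'"
proof -
  let ?F = "Fop R1 R2 eps1 eps2 nu1 nu2 D1 D2"
  have S: "pi1 \<in> prob_simplex" "pi2 \<in> prob_simplex" "pi1' \<in> prob_simplex" "pi2' \<in> prob_simplex"
    using rqe rqe' unfolding is_RQE_def by blast+
  have sm1: "\<forall>p\<in>prob_simplex. \<forall>q\<in>prob_simplex. p \<noteq> q \<longrightarrow>
         (p - q) \<bullet> (grad (\<lambda>p. D1 p opp) p - grad (\<lambda>p. D1 p opp) q) > 0"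
    if opp: "opp \<in> prob_simplex" for opp :: "real ^ 'b"
  proof (intro ballI impI)
    fix p q :: "real ^ 'b" assume pq: "p \<in> prob_simplex" "q \<in> prob_simplex" "p \<noteq> q"
    have Z: "(pi1, opp, p, pi1) \<in> Zset" "(pi1, opp, q, pi1) \<in> Zset"
      using S opp pq by (simp_all add: Zset_def)
    have ne: "(pi1, opp, p, pi1) \<noteq> (pi1, opp, q, pi1)" using pq by simp
    have A: "((pi1, opp, p, pi1) - (pi1, opp, q, pi1)) \<bullet> (?F (pi1, opp, p, pi1) - ?F (pi1, opp, q, pi1)) > 0"
      by (rule mono[unfolded strictly_monotone_on_def, rule_format, OF Z ne])
    have e1: "(pi1, opp, p, pi1) - (pi1, opp, q, pi1) = (0, 0, p - q, 0)" by simp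
    have e2: "fst (snd (snd (?F (pi1, opp, p, pi1) - ?F (pi1, opp, q, pi1))))
        = grad (\<lambda>p. D1 p opp) p - grad (\<lambda>p. D1 p opp) q"
      by (simp add: Fop_def)
    have "(0, 0, p - q, 0) \<bullet> (?F (pi1, opp, p, pi1) - ?F (pi1, opp, q, pi1)) > 0" using A unfolding e1 .
    then show "(p - q) \<bullet> (grad (\<lambda>p. D1 p opp) p - grad (\<lambda>p. D1 p opp) q) > 0"
      unfolding inner_third e2 .
  qed
  have sm2: "\<forall>p\<in>prob_simplex. \<forall>q\<in>prob_simplex. p \<noteq> q \<longrightarrow>
         (p - q) \<bullet> (grad (\<lambda>p. D2 p opp) p - grad (\<lambda>p. D2 p opp) q) > 0"
    if opp: "opp \<in> prob_simplex" for opp :: "real ^ 'a"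
  proof (intro ballI impI)
    fix p q :: "real ^ 'a" assume pq: "p \<in> prob_simplex" "q \<in> prob_simplex" "p \<noteq> q"
    have Z: "(opp, pi2, pi2, p) \<in> Zset" "(opp, pi2, pi2, q) \<in> Zset"
      using S opp pq by (simp_all add: Zset_def)
    have ne: "(opp, pi2, pi2, p) \<noteq> (opp, pi2, pi2, q)" using pq by simp
    have A: "((opp, pi2, pi2, p) - (opp, pi2, pi2, q)) \<bullet> (?F (opp, pi2, pi2, p) - ?F (opp, pi2, pi2, q)) > 0"
      by (rule mono[unfolded strictly_monotone_on_def, rule_format, OF Z ne])
    have e1: "(opp, pi2, pi2, p) - (opp, pi2, pi2, q) = (0, 0, 0, p - q)" by simp
    have e2: "snd (snd (snd (?F (opp, pi2, pi2, p) - ?F (opp, pi2, pi2, q))))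
        = grad (\<lambda>p. D2 p opp) p - grad (\<lambda>p. D2 p opp) q"
      by (simp add: Fop_def)
    have "(0, 0, 0, p - q) \<bullet> (?F (opp, pi2, pi2, p) - ?F (opp, pi2, pi2, q)) > 0" using A unfolding e1 .
    then show "(p - q) \<bullet> (grad (\<lambda>p. D2 p opp) p - grad (\<lambda>p. D2 p opp) q) > 0"
      unfolding inner_fourth e2 .
  qed
  have VI: "\<exists>p1 p2. (pi1, pi2, p1, p2) \<in> Zset \<and>
     (\<forall>z'\<in>Zset. ?F (pi1, pi2, p1, p2) \<bullet> (z' - (pi1, pi2, p1, p2)) \<ge> 0)"
    if r: "is_RQE R1 R2 eps1 eps2 nu1 nu2 D1 D2 pi1 pi2" for pi1 :: "real ^ 'a" and pi2 :: "real ^ 'b"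
  proof -
    have r1: "pi1 \<in> prob_simplex" "pi2 \<in> prob_simplex"
      "\<forall>s\<in>prob_simplex. obj R1 eps1 nu1 D1 pi1 pi2 \<le> obj R1 eps1 nu1 D1 s pi2"
      "\<forall>s\<in>prob_simplex. obj R2 eps2 nu2 D2 pi2 pi1 \<le> obj R2 eps2 nu2 D2 s pi1"
      using r unfolding is_RQE_def by blast+
    obtain p1 where p1: "p1 \<in> prob_simplex"
      "\<forall>p\<in>prob_simplex. (transpose R1 *v pi1 + grad (\<lambda>p. D1 p pi2) p1) \<bullet> (p - p1) \<ge> 0"
      "\<forall>s\<in>prob_simplex. (- (R1 *v p1) + eps1 *\<^sub>R grad nu1 pi1) \<bullet> (s - pi1) \<ge> 0"
      using key[OF eps(1) U1(2) U1(4) W1(2) W1(3) r1(2) r1(1) r1(3) sm1[OF r1(2)]] by blast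
    obtain p2 where p2: "p2 \<in> prob_simplex"
      "\<forall>p\<in>prob_simplex. (transpose R2 *v pi2 + grad (\<lambda>p. D2 p pi1) p2) \<bullet> (p - p2) \<ge> 0"
      "\<forall>s\<in>prob_simplex. (- (R2 *v p2) + eps2 *\<^sub>R grad nu2 pi2) \<bullet> (s - pi2) \<ge> 0"
      using key[OF eps(2) U2(2) U2(4) W2(2) W2(3) r1(1) r1(2) r1(4) sm2[OF r1(1)]] by blast
    have "\<forall>z'\<in>Zset. ?F (pi1, pi2, p1, p2) \<bullet> (z' - (pi1, pi2, p1, p2)) \<ge> 0"
    proof
      fix z' :: "(real ^ 'a) \<times> (real ^ 'b) \<times> (real ^ 'b) \<times> (real ^ 'a)"
      assume z': "z' \<in> Zset"
      obtain a b c e where ze: "z' = (a, b, c, e)" by (cases z') auto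
      have m: "a \<in> prob_simplex" "b \<in> prob_simplex" "c \<in> prob_simplex" "e \<in> prob_simplex"
        using z' ze by (simp_all add: Zset_def)
      have "?F (pi1, pi2, p1, p2) \<bullet> (z' - (pi1, pi2, p1, p2)) =
         (- (R1 *v p1) + eps1 *\<^sub>R grad nu1 pi1) \<bullet> (a - pi1) +
         ((- (R2 *v p2) + eps2 *\<^sub>R grad nu2 pi2) \<bullet> (b - pi2) +
         ((transpose R1 *v pi1 + grad (\<lambda>p. D1 p pi2) p1) \<bullet> (c - p1) +
          (transpose R2 *v pi2 + grad (\<lambda>p. D2 p pi1) p2) \<bullet> (e - p2)))"
        unfolding ze by (simp only: diff_Pair inner_four) (simp add: Fop_def)
      moreover have "(- (R1 *v p1) + eps1 *\<^sub>R grad nu1 pi1) \<bullet> (a - pi1) \<ge> 0" using p1(3) m(1) by blast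
      moreover have "(- (R2 *v p2) + eps2 *\<^sub>R grad nu2 pi2) \<bullet> (b - pi2) \<ge> 0" using p2(3) m(2) by blast
      moreover have "(transpose R1 *v pi1 + grad (\<lambda>p. D1 p pi2) p1) \<bullet> (c - p1) \<ge> 0" using p1(2) m(3) by blast
      moreover have "(transpose R2 *v pi2 + grad (\<lambda>p. D2 p pi1) p2) \<bullet> (e - p2) \<ge> 0" using p2(2) m(4) by blast
      ultimately show "?F (pi1, pi2, p1, p2) \<bullet> (z' - (pi1, pi2, p1, p2)) \<ge> 0"
        by linarith
    qed
    moreover have "(pi1, pi2, p1, p2) \<in> Zset" using r1(1,2) p1(1) p2(1) by (simp add: Zset_def)
    ultimately show ?thesis by blast
  qed
  obtain p1 p2 where z: "(pi1, pi2, p1, p2) \<in> Zset"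
    "\<forall>z'\<in>Zset. ?F (pi1, pi2, p1, p2) \<bullet> (z' - (pi1, pi2, p1, p2)) \<ge> 0"
    using VI[OF rqe] by blast
  obtain p1' p2' where z': "(pi1', pi2', p1', p2') \<in> Zset"
    "\<forall>z'\<in>Zset. ?F (pi1', pi2', p1', p2') \<bullet> (z' - (pi1', pi2', p1', p2')) \<ge> 0"
    using VI[OF rqe'] by blast
  define x where "x = (pi1, pi2, p1, p2)"
  define y where "y = (pi1', pi2', p1', p2')"
  have "x = y"
  proof (rule ccontr)
    assume ne: "x \<noteq> y"
    have xZ: "x \<in> Zset" using z(1) unfolding x_def .
    have yZ: "y \<in> Zset" using z'(1) unfolding y_def .
    have "(x - y) \<bullet> (?F x - ?F y) > 0"
      by (rule mono[unfolded strictly_monotone_on_def, rule_format, OF xZ yZ ne])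
    moreover have "?F x \<bullet> (y - x) \<ge> 0" using z(2)[rule_format, OF yZ] unfolding x_def .
    moreover have "?F y \<bullet> (x - y) \<ge> 0" using z'(2)[rule_format, OF xZ] unfolding y_def .
    ultimately show False using inner_mono_split[of x y "?F x" "?F y"] by linarith
  qed
  then show ?thesis unfolding x_def y_def by simp
qed

end
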